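(* Let $H$ be a real or complex Hilbert space of dimension $n$, let $N\ge n$, let $F=\{f_i\}_{i=1}^N$ be a frame for $H$ with frame operator $S_F$, and let $\{q_i\}_{i=1}^N$ be a weight number sequence. Set $c=\max\{q_i\|f_i\|\,\|S_F^{-1}f_i\|:1\le i\le N\}$, $\varrho_1=\{i:q_i\|f_i\|\,\|S_F^{-1}f_i\|=c\}$, $\varrho_2=\{1,\dots,N\}\setminus\varrho_1$, and $H_j=\operatorname{span}\{f_i:i\in\varrho_j\}$ for $j=1,2$. Suppose $H_1\cap H_2=\{0\}$ and $\{f_i:i\in\varrho_2\}$ is linearly independent. Then the canonical dual $\{S_F^{-1}f_i\}_{i=1}^N$ is the unique 1-erasure probabilistic optimal dual of $F$, and therefore it is an $m$-erasure probabilistic optimal dual of $F$ for every $m$.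
   Context: Inner products are linear in the first argument. A frame for $H$ is a finite sequence spanning $H$. Analysis operator: $\Theta_F f=(\langle f,f_i\rangle)_i$. Synthesis operator: $\Theta_G^*(c)=\sum_ic_ig_i$. Frame operator: $S_F=\Theta_F^*\Theta_F$. A dual of $F$ is a frame $G=\{g_i\}_{i=1}^N$ with $f=\sum_i\langle f,f_i\rangle g_i=\sum_i\langle f,g_i\rangle f_i$ for all $f$. A probability sequence satisfies $0\le p_i\le1$ and $\sum p_i=1$. Weight numbers: $q_i=\frac{\sum_jp_j}{\sum_jp_j-p_i}\cdot\frac{N-1}{n}$ (assumed well defined). For $1\le m\le N$, $\mathcal{D}_m^p$ is the set of $N\times N$ diagonal matrices $D$ for which there is $\Lambda$ with $|\Lambda|=m$, $D_{ii}=q_i$ for $i\in\Lambda$ and $0$ otherwise. $d_m^p(F,G)=\max\{\|\Theta_G^*D\Theta_F\|:D\in\mathcal{D}_m^p\}$ (operator norm). Optimal duals are defined recursively: - $G$ is a 1-erasure probabilistic optimal dual of $F$ if $d_1^p(F,G)=\mu_1(F):=\inf\{d_1^p(F,G'):G'\text{ a dual of }F\}$; - for $m\ge2$, $G$ is an $m$-erasure probabilistic optimal dual of $F$ if it is an $(m-1)$-erasure probabilistic optimal dual and $d_m^p(F,G)=\mu_m(F):=\inf\{d_m^p(F,G'):G'\text{ an }(m-1)\text{-erasure probabilistic optimal dual of }F\}$. *)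

theory Defs
  imports "HOL-Analysis.Analysis"
begin

text \<open>
  The n-dimensional Hilbert space H over the scalar field K (K = real or complex) is modelled
  as K^n, embedded into complex^'n (n = CARD('n)); the scalar field is encoded by a set
  K of complex numbers, which is either the reals or all complex numbers. Frames / sequences are functions
  nat => complex^'n, of which only the indices 0..N-1 matter.
\<close>

definition scalar_field :: "complex set \<Rightarrow> bool" where
  "scalar_field K \<longleftrightarrow> K = \<real> \<or> K = UNIV"

definition hspace :: "complex set \<Rightarrow> (complex ^ 'n) set" where
  "hspace K = {x. \<forall>i. x $ i \<in> K}"

definition hinner :: "complex ^ 'n \<Rightarrow> complex ^ 'n \<Rightarrow> complex" where
  "hinner x y = (\<Sum>i\<in>UNIV. x $ i * cnj (y $ i))"

definition kspan :: "complex set \<Rightarrow> nat set \<Rightarrow> (nat \<Rightarrow> complex ^ 'n) \<Rightarrow> (complex ^ 'n) set" where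
  "kspan K I f = {x. \<exists>c. (\<forall>i\<in>I. c i \<in> K) \<and> x = (\<Sum>i\<in>I. c i *s f i)}"

definition klin_indep :: "complex set \<Rightarrow> nat set \<Rightarrow> (nat \<Rightarrow> complex ^ 'n) \<Rightarrow> bool" where
  "klin_indep K I f \<longleftrightarrow>
     (\<forall>c. (\<forall>i\<in>I. c i \<in> K) \<and> (\<Sum>i\<in>I. c i *s f i) = 0 \<longrightarrow> (\<forall>i\<in>I. c i = 0))"

definition is_frame :: "complex set \<Rightarrow> nat \<Rightarrow> (nat \<Rightarrow> complex ^ 'n) \<Rightarrow> bool" where
  "is_frame K N f \<longleftrightarrow> (\<forall>i<N. f i \<in> hspace K) \<and> kspan K {..<N} f = hspace K"

definition frame_op :: "nat \<Rightarrow> (nat \<Rightarrow> complex ^ 'n) \<Rightarrow> complex ^ 'n \<Rightarrow> complex ^ 'n" where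
  "frame_op N f x = (\<Sum>i<N. hinner x (f i) *s f i)"

definition frame_op_inv :: "complex set \<Rightarrow> nat \<Rightarrow> (nat \<Rightarrow> complex ^ 'n) \<Rightarrow> complex ^ 'n \<Rightarrow> complex ^ 'n" where
  "frame_op_inv K N f y = (THE x. x \<in> hspace K \<and> frame_op N f x = y)"

definition canonical_dual :: "complex set \<Rightarrow> nat \<Rightarrow> (nat \<Rightarrow> complex ^ 'n) \<Rightarrow> nat \<Rightarrow> complex ^ 'n" where
  "canonical_dual K N f i = frame_op_inv K N f (f i)"

definition is_dual :: "complex set \<Rightarrow> nat \<Rightarrow> (nat \<Rightarrow> complex ^ 'n) \<Rightarrow> (nat \<Rightarrow> complex ^ 'n) \<Rightarrow> bool" where
  "is_dual K N f g \<longleftrightarrow> is_frame K N g \<and>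
     (\<forall>x\<in>hspace K. x = (\<Sum>i<N. hinner x (f i) *s g i) \<and> x = (\<Sum>i<N. hinner x (g i) *s f i))"

definition prob_seq :: "nat \<Rightarrow> (nat \<Rightarrow> real) \<Rightarrow> bool" where
  "prob_seq N p \<longleftrightarrow> (\<forall>i<N. 0 \<le> p i \<and> p i \<le> 1) \<and> (\<Sum>i<N. p i) = 1"

definition weight :: "nat \<Rightarrow> nat \<Rightarrow> (nat \<Rightarrow> real) \<Rightarrow> nat \<Rightarrow> real" where
  "weight n N p i = (\<Sum>j<N. p j) / ((\<Sum>j<N. p j) - p i) * ((real N - 1) / real n)"

definition opnorm :: "complex set \<Rightarrow> (complex ^ 'n \<Rightarrow> complex ^ 'n) \<Rightarrow> real" where
  "opnorm K T = Sup {norm (T x) | x. x \<in> hspace K \<and> norm x \<le> 1}"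

text \<open>Theta_G^* D Theta_F for D in D_m^p given by the index set L (|L| = m).\<close>
definition erasure_op :: "nat \<Rightarrow> (nat \<Rightarrow> real) \<Rightarrow> nat set \<Rightarrow> (nat \<Rightarrow> complex ^ 'n)
    \<Rightarrow> (nat \<Rightarrow> complex ^ 'n) \<Rightarrow> complex ^ 'n \<Rightarrow> complex ^ 'n" where
  "erasure_op N p L f g x =
     (\<Sum>i\<in>L. (complex_of_real (weight CARD('n) N p i) * hinner x (f i)) *s g i)"

definition dmp :: "complex set \<Rightarrow> nat \<Rightarrow> (nat \<Rightarrow> real) \<Rightarrow> nat \<Rightarrow> (nat \<Rightarrow> complex ^ 'n)
    \<Rightarrow> (nat \<Rightarrow> complex ^ 'n) \<Rightarrow> real" where
  "dmp K N p m f g = Max {opnorm K (erasure_op N p L f g) | L. L \<subseteq> {..<N} \<and> card L = m}"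

fun opt_dual :: "complex set \<Rightarrow> nat \<Rightarrow> (nat \<Rightarrow> real) \<Rightarrow> (nat \<Rightarrow> complex ^ 'n) \<Rightarrow> nat
    \<Rightarrow> (nat \<Rightarrow> complex ^ 'n) \<Rightarrow> bool" where
  "opt_dual K N p f 0 g = is_dual K N f g"
| "opt_dual K N p f (Suc m) g \<longleftrightarrow> opt_dual K N p f m g \<and>
     dmp K N p (Suc m) f g = Inf {dmp K N p (Suc m) f g' | g'. opt_dual K N p f m g'}"

end

theory Submission
  imports Defs
begin


lemma sf_cases: "scalar_field K \<Longrightarrow> K = \<real> \<or> K = UNIV"
  by (simp add: scalar_field_def)

lemma sf_add: "scalar_field K \<Longrightarrow> a \<in> K \<Longrightarrow> b \<in> K \<Longrightarrow> a + b \<in> K"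
  by (auto simp: scalar_field_def)
lemma sf_mult: "scalar_field K \<Longrightarrow> a \<in> K \<Longrightarrow> b \<in> K \<Longrightarrow> a * b \<in> K"
  by (auto simp: scalar_field_def)
lemma sf_minus: "scalar_field K \<Longrightarrow> a \<in> K \<Longrightarrow> - a \<in> K"
  by (auto simp: scalar_field_def)
lemma sf_cnj: "scalar_field K \<Longrightarrow> a \<in> K \<Longrightarrow> cnj a \<in> K"
  by (auto simp: scalar_field_def Reals_cnj_iff)
lemma sf_of_real: "scalar_field K \<Longrightarrow> complex_of_real r \<in> K"
  by (auto simp: scalar_field_def)
lemma sf_zero: "scalar_field K \<Longrightarrow> 0 \<in> K"
  using sf_of_real[of K 0] by simp
lemma sf_sum: "scalar_field K \<Longrightarrow> (\<And>i. i \<in> I \<Longrightarrow> a i \<in> K) \<Longrightarrow> sum a I \<in> K"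
  by (induction I rule: infinite_finite_induct) (auto simp: sf_zero sf_add)

lemma hs_add: "scalar_field K \<Longrightarrow> x \<in> hspace K \<Longrightarrow> y \<in> hspace K \<Longrightarrow> x + y \<in> hspace K"
  by (auto simp: hspace_def sf_add)
lemma hs_minus: "scalar_field K \<Longrightarrow> x \<in> hspace K \<Longrightarrow> - x \<in> hspace K"
  by (auto simp: hspace_def sf_minus)
lemma hs_diff: "scalar_field K \<Longrightarrow> x \<in> hspace K \<Longrightarrow> y \<in> hspace K \<Longrightarrow> x - y \<in> hspace K"
  using hs_add hs_minus by (metis diff_conv_add_uminus)
lemma hs_smult: "scalar_field K \<Longrightarrow> c \<in> K \<Longrightarrow> x \<in> hspace K \<Longrightarrow> c *s x \<in> hspace K"
  by (auto simp: hspace_def sf_mult)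
lemma hs_scaleR: "scalar_field K \<Longrightarrow> x \<in> hspace K \<Longrightarrow> r *\<^sub>R x \<in> hspace K"
proof -
  assume a: "scalar_field K" "x \<in> hspace K"
  have "\<And>i. (r *\<^sub>R x) $ i = complex_of_real r * x $ i" by (metis vector_scaleR_component scaleR_conv_of_real)
  thus ?thesis using a by (auto simp: hspace_def intro!: sf_mult sf_of_real)
qed
lemma hs_zero: "scalar_field K \<Longrightarrow> 0 \<in> hspace K"
  by (auto simp: hspace_def sf_zero)
lemma hs_sum: "scalar_field K \<Longrightarrow> (\<And>i. i \<in> I \<Longrightarrow> a i \<in> hspace K) \<Longrightarrow> sum a I \<in> hspace K"
  by (induction I rule: infinite_finite_induct) (auto simp: hs_zero hs_add)
lemma hs_axis: "scalar_field K \<Longrightarrow> axis k 1 \<in> hspace K"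
  by (auto simp: hspace_def axis_def sf_zero intro: sf_of_real[of K 1, simplified])
lemma hs_subspace: "scalar_field K \<Longrightarrow> subspace (hspace K)"
  by (auto simp: subspace_def hs_zero hs_add hs_scaleR)

lemma hinner_zero_left[simp]: "hinner 0 y = 0" unfolding hinner_def by simp
lemma hinner_zero_right[simp]: "hinner y 0 = 0" unfolding hinner_def by simp
lemma hinner_add_left: "hinner (x + y) z = hinner x z + hinner y z"
  by (simp add: hinner_def sum.distrib algebra_simps)
lemma hinner_add_right: "hinner z (x + y) = hinner z x + hinner z y"
  by (simp add: hinner_def sum.distrib algebra_simps)
lemma hinner_diff_left: "hinner (x - y) z = hinner x z - hinner y z"
  by (simp add: hinner_def sum_subtractf algebra_simps)
lemma hinner_diff_right: "hinner z (x - y) = hinner z x - hinner z y"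
  by (simp add: hinner_def sum_subtractf algebra_simps)
lemma hinner_smult_left: "hinner (c *s x) y = c * hinner x y"
  by (simp add: hinner_def sum_distrib_left algebra_simps)
lemma hinner_smult_right: "hinner x (c *s y) = cnj c * hinner x y"
  by (simp add: hinner_def sum_distrib_left algebra_simps)
lemma hinner_cnj: "hinner y x = cnj (hinner x y)"
  by (simp add: hinner_def mult.commute)
lemma hinner_sum_left: "hinner (\<Sum>i\<in>I. a i) y = (\<Sum>i\<in>I. hinner (a i) y)"
  by (induction I rule: infinite_finite_induct) (simp_all add: hinner_add_left)
lemma hinner_sum_right: "hinner y (\<Sum>i\<in>I. a i) = (\<Sum>i\<in>I. hinner y (a i))"
  by (induction I rule: infinite_finite_induct) (simp_all add: hinner_add_right)
lemma hinner_in: "scalar_field K \<Longrightarrow> x \<in> hspace K \<Longrightarrow> y \<in> hspace K \<Longrightarrow> hinner x y \<in> K"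
  unfolding hinner_def hspace_def by (auto intro!: sf_sum sf_mult sf_cnj)

lemma Re_hinner: "Re (hinner x y) = inner x y"
  by (simp add: hinner_def inner_vec_def inner_complex_def Re_sum)

lemma hinner_self: "hinner x x = complex_of_real ((norm x)^2)"
proof -
  have "Im (hinner x x) = 0" by (simp add: hinner_def Im_sum algebra_simps)
  hence "hinner x x = complex_of_real (Re (hinner x x))" by (simp add: complex_eq_iff)
  thus ?thesis by (simp add: Re_hinner power2_norm_eq_inner)
qed

lemma hinner_self_eq_0: "hinner x x = 0 \<longleftrightarrow> x = 0"
  by (simp add: hinner_self)

lemma norm_smult: "norm (c *s x) = norm c * norm (x :: complex ^ 'n)"
proof -
  have "complex_of_real ((norm (c *s x))^2) = complex_of_real ((norm c * norm x)^2)"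
  proof -
    have "cnj c * c = complex_of_real ((norm c)^2)" by (metis complex_norm_square mult.commute)
    thus ?thesis unfolding hinner_self[symmetric] hinner_smult_left hinner_smult_right
      by (simp add: hinner_self power_mult_distrib mult.assoc[symmetric])
  qed
  hence "(norm (c *s x))^2 = (norm c * norm x)^2" using of_real_eq_iff by blast
  thus ?thesis by (simp add: power2_eq_iff_nonneg)
qed

lemma hinner_cs: "norm (hinner x y) \<le> norm x * norm y"
proof (cases "hinner x y = 0")
  case True thus ?thesis by simp
next
  case False
  define w where "w = hinner x y"
  define a where "a = cnj w / complex_of_real (norm w)"
  have na: "norm a = 1" using False by (simp add: a_def w_def norm_divide)
  have "hinner (a *s x) y = complex_of_real (norm w)"
  proof -
    have "w * cnj w = complex_of_real (norm w) * complex_of_real (norm w)"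
      by (simp add: complex_norm_square[symmetric] power2_eq_square)
    thus ?thesis using False by (simp add: hinner_smult_left a_def w_def[symmetric] field_simps)
  qed
  hence "norm w = inner (a *s x) y" using Re_hinner by (metis Re_complex_of_real)
  also have "\<dots> \<le> norm (a *s x) * norm y" by (rule norm_cauchy_schwarz)
  also have "\<dots> = norm x * norm y" by (simp add: norm_smult na)
  finally show ?thesis by (simp add: w_def)
qed



lemma scaleR_smult: "r *\<^sub>R (x::complex^'n) = complex_of_real r *s x"
  by (simp add: vec_eq_iff) (metis scaleR_conv_of_real)

lemma frame_op_add: "frame_op N f (x + y) = frame_op N f x + frame_op N f y"
  by (simp add: frame_op_def hinner_add_left vector_sadd_rdistrib sum.distrib)
lemma frame_op_diff: "frame_op N f (x - y) = frame_op N f x - frame_op N f y"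
  by (simp add: frame_op_def hinner_diff_left vec_eq_iff sum_subtractf algebra_simps)
lemma frame_op_smult: "frame_op N f (c *s x) = c *s frame_op N f x"
  by (simp add: frame_op_def hinner_smult_left vector_smult_assoc vec_eq_iff sum_distrib_left mult.assoc)
lemma frame_op_zero: "frame_op N f 0 = 0"
  using frame_op_smult[of N f 0 0] by simp
lemma frame_op_sum: "frame_op N f (\<Sum>i\<in>I. a i) = (\<Sum>i\<in>I. frame_op N f (a i))"
  by (induction I rule: infinite_finite_induct) (simp_all add: frame_op_add frame_op_zero)
lemma frame_op_linear: "linear (frame_op N f)"
  by (rule linearI) (simp_all add: frame_op_add scaleR_smult frame_op_smult)

lemma frame_op_hinner: "hinner (frame_op N f x) y = (\<Sum>i<N. hinner x (f i) * hinner (f i) y)"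
  by (simp add: frame_op_def hinner_sum_left hinner_smult_left)

lemma frame_op_selfadj: "hinner (frame_op N f a) b = hinner a (frame_op N f b)"
proof -
  have "hinner a (frame_op N f b) = cnj (hinner (frame_op N f b) a)" by (rule hinner_cnj)
  also have "\<dots> = (\<Sum>i<N. hinner a (f i) * hinner (f i) b)"
    unfolding frame_op_hinner by (simp add: hinner_cnj[of a] hinner_cnj[of "f _" b] mult.commute)
  finally show ?thesis by (simp add: frame_op_hinner)
qed

lemma kspan_in: "scalar_field K \<Longrightarrow> (\<And>i. i \<in> I \<Longrightarrow> f i \<in> hspace K) \<Longrightarrow> x \<in> kspan K I f \<Longrightarrow> x \<in> hspace K"
  unfolding kspan_def by (auto intro!: hs_sum hs_smult)

lemma frame_op_in:
  assumes K: "scalar_field K" and fr: "is_frame K N f" and x: "x \<in> hspace K"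
  shows "frame_op N f x \<in> hspace K"
  using fr x unfolding frame_op_def is_frame_def
  by (auto intro!: hs_sum hs_smult K hinner_in)

lemma frame_op_kernel:
  assumes K: "scalar_field K" and fr: "is_frame K N f" and x: "x \<in> hspace K"
    and S0: "frame_op N f x = 0"
  shows "x = 0"
proof -
  have "hinner (frame_op N f x) x = 0" using S0 by simp
  hence "Re (\<Sum>i<N. hinner x (f i) * hinner (f i) x) = 0" by (simp add: frame_op_hinner)
  hence "(\<Sum>i<N. (norm (hinner x (f i)))^2) = 0"
    by (simp add: Re_sum hinner_cnj[of "f _" x] complex_norm_square[symmetric] del: of_real_power)
  hence z: "\<forall>i<N. hinner x (f i) = 0"
    by (subst (asm) sum_nonneg_eq_0_iff) auto
  from fr x obtain c where c: "x = (\<Sum>i<N. c i *s f i)"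
    unfolding is_frame_def kspan_def by blast
  have "hinner x x = (\<Sum>i<N. cnj (c i) * hinner x (f i))"
    by (subst (2) c) (simp add: hinner_sum_right hinner_smult_right)
  also have "\<dots> = 0" using z by simp
  finally show ?thesis by (simp add: hinner_self_eq_0)
qed

lemma dim_img_c: "linear (g::complex^'n \<Rightarrow> complex^'n) \<Longrightarrow> inj_on g (span H) \<Longrightarrow> dim (g ` H) = dim H"
  using eucl.dim_image_eq[of g H] by simp
lemma sub_dim_eq_c: "subspace (S::(complex^'n) set) \<Longrightarrow> subspace T \<Longrightarrow> S \<subseteq> T \<Longrightarrow> dim T \<le> dim S \<Longrightarrow> S = T"
  by (rule eucl.subspace_dim_equal)

lemma frame_op_surj:
  fixes f :: "nat \<Rightarrow> complex^'n"
  assumes K: "scalar_field K" and fr: "is_frame K N f" and y: "y \<in> hspace K"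
  shows "\<exists>x\<in>hspace K. frame_op N f x = y"
proof -
  let ?S = "frame_op N f" and ?H = "hspace K :: (complex^'n) set"
  have sub: "subspace ?H" using hs_subspace[OF K] .
  have sp: "span ?H = ?H" using span_eq_iff sub by blast
  have inj: "inj_on ?S ?H"
  proof (rule inj_onI)
    fix a b assume a: "a \<in> ?H" and b: "b \<in> ?H" and e: "?S a = ?S b"
    have "?S (a - b) = 0" using e by (simp add: frame_op_diff)
    hence "a - b = 0" using frame_op_kernel[OF K fr hs_diff[OF K a b]] by blast
    thus "a = b" by simp
  qed
  have d: "dim (?S ` ?H) = dim ?H" by (rule dim_img_c[OF frame_op_linear]) (simp add: sp inj)
  have im: "?S ` ?H \<subseteq> ?H" using frame_op_in[OF K fr] by blast
  have "?S ` ?H = ?H"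
    by (rule sub_dim_eq_c[OF linear_subspace_image[OF frame_op_linear sub] sub im]) (simp add: d)
  thus ?thesis using y by (metis imageE)
qed

lemma frame_op_inv:
  assumes K: "scalar_field K" and fr: "is_frame K N f" and y: "y \<in> hspace K"
  shows "frame_op_inv K N f y \<in> hspace K \<and> frame_op N f (frame_op_inv K N f y) = y"
proof -
  obtain x where x: "x \<in> hspace K" "frame_op N f x = y" using frame_op_surj[OF assms] by blast
  have "\<exists>!x. x \<in> hspace K \<and> frame_op N f x = y"
  proof (rule ex1I[of _ x])
    fix z assume z: "z \<in> hspace K \<and> frame_op N f z = y"
    have "frame_op N f (z - x) = 0" using z x by (simp add: frame_op_diff)
    hence "z - x = 0" using frame_op_kernel[OF K fr hs_diff[OF K _ x(1)]] z by blast
    thus "z = x" by simp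
  qed (use x in auto)
  thus ?thesis unfolding frame_op_inv_def by (rule theI')
qed



lemma candual:
  assumes K: "scalar_field K" and fr: "is_frame K N f" and i: "i < N"
  shows "canonical_dual K N f i \<in> hspace K \<and> frame_op N f (canonical_dual K N f i) = f i"
  unfolding canonical_dual_def
  by (rule frame_op_inv[OF K fr]) (use fr i in \<open>auto simp: is_frame_def\<close>)

lemma frame_op_eqI:
  assumes K: "scalar_field K" and fr: "is_frame K N f" and a: "a \<in> hspace K" and b: "b \<in> hspace K"
    and e: "frame_op N f a = frame_op N f b"
  shows "a = b"
proof -
  have "frame_op N f (a - b) = 0" using e by (simp add: frame_op_diff)
  hence "a - b = 0" using frame_op_kernel[OF K fr hs_diff[OF K a b]] by blast
  thus ?thesis by simp
qed

lemma cd_comb: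
  assumes K: "scalar_field K" and fr: "is_frame K N f" and I: "I \<subseteq> {..<N}"
    and c: "\<forall>i\<in>I. c i \<in> K"
  shows "(\<Sum>i\<in>I. c i *s canonical_dual K N f i) \<in> hspace K"
    and "frame_op N f (\<Sum>i\<in>I. c i *s canonical_dual K N f i) = (\<Sum>i\<in>I. c i *s f i)"
proof -
  show "(\<Sum>i\<in>I. c i *s canonical_dual K N f i) \<in> hspace K"
    using candual[OF K fr] I c by (auto intro!: hs_sum hs_smult K)
  show "frame_op N f (\<Sum>i\<in>I. c i *s canonical_dual K N f i) = (\<Sum>i\<in>I. c i *s f i)"
    using candual[OF K fr] I by (auto simp: frame_op_sum frame_op_smult intro!: sum.cong)
qed

lemma cd_comb0:
  assumes K: "scalar_field K" and fr: "is_frame K N f" and I: "I \<subseteq> {..<N}"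
    and c: "\<forall>i\<in>I. c i \<in> K" and z: "(\<Sum>i\<in>I. c i *s f i) = 0"
  shows "(\<Sum>i\<in>I. c i *s canonical_dual K N f i) = 0"
  by (rule frame_op_eqI[OF K fr cd_comb(1)[OF K fr I c] hs_zero[OF K]])
     (simp add: cd_comb(2)[OF K fr I c] z frame_op_zero)

lemma frame_in: "is_frame K N f \<Longrightarrow> i < N \<Longrightarrow> f i \<in> hspace K"
  by (simp add: is_frame_def)

lemma recon1:
  assumes K: "scalar_field K" and fr: "is_frame K N f" and x: "x \<in> hspace K"
  shows "(\<Sum>i<N. hinner x (f i) *s canonical_dual K N f i) = x"
proof -
  have c: "\<forall>i\<in>{..<N}. hinner x (f i) \<in> K" using hinner_in[OF K x] frame_in[OF fr] by auto
  show ?thesis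
  proof (rule frame_op_eqI[OF K fr cd_comb(1)[OF K fr order_refl c] x])
    show "frame_op N f (\<Sum>i<N. hinner x (f i) *s canonical_dual K N f i) = frame_op N f x"
      unfolding cd_comb(2)[OF K fr order_refl c] by (simp add: frame_op_def)
  qed
qed

lemma recon2:
  assumes K: "scalar_field K" and fr: "is_frame K N f" and x: "x \<in> hspace K"
  shows "(\<Sum>i<N. hinner x (canonical_dual K N f i) *s f i) = x"
proof -
  obtain y where y: "y \<in> hspace K" "frame_op N f y = x" using frame_op_surj[OF K fr x] by blast
  have "\<And>i. i < N \<Longrightarrow> hinner x (canonical_dual K N f i) = hinner y (f i)"
    using candual[OF K fr] y(2)[symmetric] by (simp add: frame_op_selfadj)
  hence "(\<Sum>i<N. hinner x (canonical_dual K N f i) *s f i) = frame_op N f y"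
    by (simp add: frame_op_def)
  thus ?thesis using y by simp
qed

lemma cd_dual:
  fixes f :: "nat \<Rightarrow> complex^'n"
  assumes K: "scalar_field K" and fr: "is_frame K N f"
  shows "is_dual K N f (canonical_dual K N f)"
proof -
  have inH: "\<forall>i<N. canonical_dual K N f i \<in> hspace K" using candual[OF K fr] by blast
  have "kspan K {..<N} (canonical_dual K N f) = hspace K"
  proof
    show "kspan K {..<N} (canonical_dual K N f) \<subseteq> hspace K"
      using kspan_in[OF K, of "{..<N}"] inH by blast
    show "hspace K \<subseteq> kspan K {..<N} (canonical_dual K N f)"
    proof
      fix x :: "complex^'n" assume x: "x \<in> hspace K"
      have "\<forall>i\<in>{..<N}. hinner x (f i) \<in> K" using hinner_in[OF K x] frame_in[OF fr] by auto
      thus "x \<in> kspan K {..<N} (canonical_dual K N f)"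
        unfolding kspan_def using recon1[OF K fr x] by force
    qed
  qed
  thus ?thesis using inH recon1[OF K fr] recon2[OF K fr]
    by (simp add: is_dual_def is_frame_def)
qed

lemma opnorm_r1:
  assumes K: "scalar_field K" and a: "a \<ge> 0" and fi: "fi \<in> hspace K"
  shows "opnorm K (\<lambda>x. (complex_of_real a * hinner x fi) *s g) = a * norm fi * norm g"
  unfolding opnorm_def
proof (rule cSup_eq_maximum)
  show "a * norm fi * norm g \<in> {norm ((complex_of_real a * hinner x fi) *s g) |x. x \<in> hspace K \<and> norm x \<le> 1}"
  proof (cases "fi = 0")
    case True thus ?thesis using hs_zero[OF K] by (auto simp: norm_smult intro!: exI[of _ 0])
  next
    case False
    define x where "x = (1 / norm fi) *\<^sub>R fi"
    have xH: "x \<in> hspace K" using hs_scaleR[OF K fi] by (simp add: x_def)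
    have nx: "norm x = 1" using False by (simp add: x_def)
    have "hinner x fi = complex_of_real (norm fi)"
      using False by (simp add: x_def scaleR_smult hinner_smult_left hinner_self power2_eq_square)
    hence "norm ((complex_of_real a * hinner x fi) *s g) = a * norm fi * norm g"
      using a by (simp add: norm_smult norm_mult)
    thus ?thesis using xH nx by force
  qed
next
  fix y assume "y \<in> {norm ((complex_of_real a * hinner x fi) *s g) |x. x \<in> hspace K \<and> norm x \<le> 1}"
  then obtain x where x: "norm x \<le> 1" and y: "y = norm ((complex_of_real a * hinner x fi) *s g)" by blast
  have "y = a * norm (hinner x fi) * norm g" using a by (simp add: y norm_smult norm_mult)
  also have "\<dots> \<le> a * (norm x * norm fi) * norm g"
    by (intro mult_right_mono mult_left_mono hinner_cs a) simp_all
  also have "\<dots> \<le> a * norm fi * norm g"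
  proof -
    have "norm x * (norm fi * norm g) \<le> norm fi * norm g"
      using x by (simp add: mult_left_le_one_le)
    thus ?thesis using a by (simp add: mult.assoc mult_left_mono)
  qed
  finally show "y \<le> a * norm fi * norm g" .
qed

lemma dmp1:
  fixes g :: "nat \<Rightarrow> complex^'n"
  assumes K: "scalar_field K" and fr: "is_frame K N f"
    and q: "\<forall>i<N. weight CARD('n) N p i \<ge> 0"
  shows "dmp K N p 1 f g = Max ((\<lambda>i. weight CARD('n) N p i * norm (f i) * norm (g i)) ` {..<N})"
proof -
  have "{opnorm K (erasure_op N p L f g) | L. L \<subseteq> {..<N} \<and> card L = 1}
      = (\<lambda>i. weight CARD('n) N p i * norm (f i) * norm (g i)) ` {..<N}"
  proof (intro equalityI subsetI)
    fix y assume "y \<in> {opnorm K (erasure_op N p L f g) | L. L \<subseteq> {..<N} \<and> card L = 1}"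
    then obtain L where L: "L \<subseteq> {..<N}" "card L = 1" and y: "y = opnorm K (erasure_op N p L f g)" by blast
    obtain i where Li: "L = {i}" using L(2) card_1_singletonE by blast
    have i: "i < N" using L Li by auto
    have "erasure_op N p L f g = (\<lambda>x. (complex_of_real (weight CARD('n) N p i) * hinner x (f i)) *s g i)"
      by (simp add: Li erasure_op_def fun_eq_iff)
    moreover have "opnorm K (\<lambda>x. (complex_of_real (weight CARD('n) N p i) * hinner x (f i)) *s g i) = weight CARD('n) N p i * norm (f i) * norm (g i)"
      by (rule opnorm_r1[OF K]) (use q i frame_in[OF fr i] in auto)
    ultimately have "y = weight CARD('n) N p i * norm (f i) * norm (g i)"
      using y by simp
    thus "y \<in> (\<lambda>i. weight CARD('n) N p i * norm (f i) * norm (g i)) ` {..<N}" using i by blast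
  next
    fix y assume "y \<in> (\<lambda>i. weight CARD('n) N p i * norm (f i) * norm (g i)) ` {..<N}"
    then obtain i where i: "i < N" and y: "y = weight CARD('n) N p i * norm (f i) * norm (g i)" by blast
    have "erasure_op N p {i} f g = (\<lambda>x. (complex_of_real (weight CARD('n) N p i) * hinner x (f i)) *s g i)"
      by (simp add: erasure_op_def fun_eq_iff)
    moreover have "opnorm K (\<lambda>x. (complex_of_real (weight CARD('n) N p i) * hinner x (f i)) *s g i) = weight CARD('n) N p i * norm (f i) * norm (g i)"
      by (rule opnorm_r1[OF K]) (use q i frame_in[OF fr i] in auto)
    ultimately have "y = opnorm K (erasure_op N p {i} f g)"
      using y by simp
    thus "y \<in> {opnorm K (erasure_op N p L f g) | L. L \<subseteq> {..<N} \<and> card L = 1}" using i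
      by (intro CollectI exI[of _ "{i}"]) auto
  qed
  thus ?thesis by (simp add: dmp_def)
qed



lemma smult_diff: "(a - b) *s (v::complex^'n) = a *s v - b *s v"
  by (simp add: vec_eq_iff algebra_simps)

lemma hinner_axis: "hinner (axis k 1) v = cnj (v $ k)"
proof -
  have "\<And>i. axis k 1 $ i * cnj (v $ i) = (if i = k then cnj (v $ k) else 0)" by (simp add: axis_def)
  thus ?thesis by (simp add: hinner_def)
qed

lemma trace_zero:
  fixes h u :: "nat \<Rightarrow> complex^'n"
  assumes z: "\<And>k. (\<Sum>i\<in>I. hinner (axis k 1) (u i) *s h i) = 0"
  shows "(\<Sum>i\<in>I. hinner (h i) (u i)) = 0"
proof -
  have "(\<Sum>i\<in>I. hinner (h i) (u i)) = (\<Sum>i\<in>I. \<Sum>k\<in>UNIV. cnj (u i $ k) * h i $ k)"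
    by (simp add: hinner_def mult.commute)
  also have "\<dots> = (\<Sum>k\<in>UNIV. \<Sum>i\<in>I. cnj (u i $ k) * h i $ k)" by (rule sum.swap)
  also have "\<dots> = (\<Sum>k\<in>UNIV. (\<Sum>i\<in>I. hinner (axis k 1) (u i) *s h i) $ k)"
    by (simp add: sum_component hinner_axis)
  also have "\<dots> = 0" using z by simp
  finally show ?thesis .
qed

lemma main_unique:
  fixes f g :: "nat \<Rightarrow> complex^'n"
  assumes K: "scalar_field K" and fr: "is_frame K N f" and dual: "is_dual K N f g"
    and R1: "R1 \<subseteq> {..<N}" and R2: "R2 = {..<N} - R1"
    and inter: "kspan K R1 f \<inter> kspan K R2 f = {0}"
    and indep: "klin_indep K R2 f"
    and le: "\<forall>i\<in>R1. norm (g i) \<le> norm (canonical_dual K N f i)"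
  shows "\<forall>i<N. g i = canonical_dual K N f i"
proof -
  define h where "h = canonical_dual K N f"
  define u where "u i = g i - h i" for i
  have gH: "\<forall>i<N. g i \<in> hspace K" using dual unfolding is_dual_def is_frame_def by blast
  have hH: "\<forall>i<N. h i \<in> hspace K" using candual[OF K fr] by (simp add: h_def)
  have uH: "\<forall>i<N. u i \<in> hspace K" using gH hH by (auto simp: u_def intro: hs_diff[OF K])
  have cK: "\<And>x i. x \<in> hspace K \<Longrightarrow> i < N \<Longrightarrow> hinner x (u i) \<in> K"
    using uH hinner_in[OF K] by blast
  have s1: "(\<Sum>i<N. hinner x (u i) *s f i) = 0" if x: "x \<in> hspace K" for x
  proof -
    have "(\<Sum>i<N. hinner x (u i) *s f i) = (\<Sum>i<N. hinner x (g i) *s f i) - (\<Sum>i<N. hinner x (h i) *s f i)"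
      by (simp add: u_def hinner_diff_right smult_diff sum_subtractf)
    also have "\<dots> = x - x"
    proof -
      have d2: "x = (\<Sum>i<N. hinner x (g i) *s f i)" using dual x unfolding is_dual_def by blast
      show ?thesis unfolding d2[symmetric] h_def recon2[OF K fr x] ..
    qed
    finally show ?thesis by simp
  qed
  have fin: "finite {..<N}" by simp
  have split: "(\<Sum>i<N. hinner x (u i) *s f i) = (\<Sum>i\<in>R2. hinner x (u i) *s f i) + (\<Sum>i\<in>R1. hinner x (u i) *s f i)" for x
    unfolding R2 by (rule sum.subset_diff[OF R1 fin])
  have R2N: "R2 \<subseteq> {..<N}" using R2 by blast
  have A0: "(\<Sum>i\<in>R1. hinner x (u i) *s f i) = 0 \<and> (\<Sum>i\<in>R2. hinner x (u i) *s f i) = 0"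
    if x: "x \<in> hspace K" for x
  proof -
    let ?A = "\<Sum>i\<in>R1. hinner x (u i) *s f i" and ?B = "\<Sum>i\<in>R2. hinner x (u i) *s f i"
    have "?B + ?A = 0" using s1[OF x] split[of x] by simp
    hence AB: "?A = - ?B" by (metis add.commute eq_neg_iff_add_eq_0)
    have "?A \<in> kspan K R1 f" unfolding kspan_def using cK[OF x] R1
      by (intro CollectI exI[of _ "\<lambda>i. hinner x (u i)"]) auto
    moreover have "?A \<in> kspan K R2 f"
    proof -
      have "?A = (\<Sum>i\<in>R2. (- hinner x (u i)) *s f i)"
        unfolding AB by (simp add: sum_negf[symmetric] vec_eq_iff sum_component)
      thus ?thesis unfolding kspan_def using cK[OF x] R2N sf_minus[OF K]
        by (intro CollectI exI[of _ "\<lambda>i. - hinner x (u i)"]) auto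
    qed
    ultimately have "?A \<in> kspan K R1 f \<inter> kspan K R2 f" by (rule IntI)
    hence "?A = 0" unfolding inter by simp
    thus ?thesis using AB by simp
  qed
  have u2: "\<forall>i\<in>R2. u i = 0"
  proof
    fix i assume i: "i \<in> R2"
    have iN: "i < N" using i R2 by blast
    have c1: "\<forall>j\<in>R2. hinner (u i) (u j) \<in> K" using cK[OF uH[rule_format, OF iN]] R2N by blast
    have c2: "(\<Sum>j\<in>R2. hinner (u i) (u j) *s f j) = 0" using A0[OF uH[rule_format, OF iN]] by blast
    have "\<forall>j\<in>R2. hinner (u i) (u j) = 0"
      using indep c1 c2 unfolding klin_indep_def by (elim allE[of _ "\<lambda>j. hinner (u i) (u j)"]) simp
    thus "u i = 0" using i hinner_self_eq_0 by blast
  qed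
  have tz: "(\<Sum>i\<in>R1. hinner (h i) (u i)) = 0"
  proof (rule trace_zero)
    fix k
    have cR: "\<forall>i\<in>R1. hinner (axis k 1) (u i) \<in> K" using cK[OF hs_axis[OF K]] R1 by blast
    show "(\<Sum>i\<in>R1. hinner (axis k 1) (u i) *s h i) = 0"
      unfolding h_def by (rule cd_comb0[OF K fr R1 cR]) (use A0[OF hs_axis[OF K]] in blast)
  qed
  have ineq: "2 * inner (h i) (u i) + (norm (u i))^2 \<le> 0" if i: "i \<in> R1" for i
  proof -
    have "g i = h i + u i" by (simp add: u_def)
    hence "(norm (g i))^2 = (norm (h i))^2 + 2 * inner (h i) (u i) + (norm (u i))^2"
      by (simp add: power2_norm_eq_inner inner_add inner_commute)
    moreover have "(norm (g i))^2 \<le> (norm (h i))^2"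
      using le i by (simp add: h_def power_mono)
    ultimately show ?thesis by simp
  qed
  have "(\<Sum>i\<in>R1. inner (h i) (u i)) = 0"
    using arg_cong[OF tz, of Re] by (simp add: Re_sum Re_hinner)
  hence "(\<Sum>i\<in>R1. 2 * inner (h i) (u i) + (norm (u i))^2) = (\<Sum>i\<in>R1. (norm (u i))^2)"
    by (simp add: sum.distrib sum_distrib_left[symmetric])
  moreover have "(\<Sum>i\<in>R1. 2 * inner (h i) (u i) + (norm (u i))^2) \<le> 0"
    using ineq by (simp add: sum_nonpos)
  ultimately have "(\<Sum>i\<in>R1. (norm (u i))^2) = 0"
    by (simp add: order_antisym sum_nonneg)
  moreover have "finite R1" using R1 finite_subset by blast
  ultimately have u1: "\<forall>i\<in>R1. u i = 0" by (simp add: sum_nonneg_eq_0_iff)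
  show ?thesis
  proof (intro allI impI)
    fix i assume "i < N"
    hence "u i = 0" using u1 u2 R2 by blast
    thus "g i = canonical_dual K N f i" by (simp add: u_def h_def)
  qed
qed



lemma dmp_cong:
  assumes "\<forall>i<N. g i = g' i"
  shows "dmp K N p m f g = dmp K N p m f g'"
proof -
  have "\<And>L. L \<subseteq> {..<N} \<Longrightarrow> erasure_op N p L f g = erasure_op N p L f g'"
    using assms unfolding erasure_op_def by (auto simp: fun_eq_iff intro!: sum.cong)
  hence "{opnorm K (erasure_op N p L f g) | L. L \<subseteq> {..<N} \<and> card L = m}
       = {opnorm K (erasure_op N p L f g') | L. L \<subseteq> {..<N} \<and> card L = m}" by metis
  thus ?thesis by (simp add: dmp_def)
qed

lemma opt_down: "opt_dual K N p f m g \<Longrightarrow> 1 \<le> m \<Longrightarrow> opt_dual K N p f 1 g"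
proof (induction m)
  case 0 thus ?case by simp
next
  case (Suc m)
  show ?case
  proof (cases "m = 0")
    case True thus ?thesis using Suc by simp
  next
    case False thus ?thesis using Suc by simp
  qed
qed

lemma opt_all:
  assumes one: "opt_dual K N p f 1 h"
    and uniq: "\<forall>g. opt_dual K N p f 1 g \<longrightarrow> (\<forall>i<N. g i = h i)"
  shows "1 \<le> m \<Longrightarrow> opt_dual K N p f m h"
proof (induction m)
  case 0 thus ?case by simp
next
  case (Suc m)
  show ?case
  proof (cases "m = 0")
    case True thus ?thesis using one by simp
  next
    case False
    hence IH: "opt_dual K N p f m h" using Suc by simp
    have "{dmp K N p (Suc m) f g' | g'. opt_dual K N p f m g'} = {dmp K N p (Suc m) f h}"
    proof (intro equalityI subsetI)
      fix y assume "y \<in> {dmp K N p (Suc m) f g' | g'. opt_dual K N p f m g'}"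
      then obtain g' where g': "opt_dual K N p f m g'" and y: "y = dmp K N p (Suc m) f g'" by blast
      have "opt_dual K N p f 1 g'" using opt_down[OF g'] False by simp
      hence "\<forall>i<N. g' i = h i" using uniq by blast
      thus "y \<in> {dmp K N p (Suc m) f h}" using y dmp_cong by auto
    next
      fix y assume "y \<in> {dmp K N p (Suc m) f h}"
      thus "y \<in> {dmp K N p (Suc m) f g' | g'. opt_dual K N p f m g'}" using IH by blast
    qed
    thus ?thesis using IH by simp
  qed
qed

theorem corollary4p1:
  fixes K :: "complex set" and N :: nat and f :: "nat \<Rightarrow> complex ^ 'n" and p :: "nat \<Rightarrow> real"
  assumes K: "scalar_field K"
    and NgE: "N \<ge> CARD('n)"
    and frame: "is_frame K N f"
    and prob: "prob_seq N p"
    and wd: "\<forall>i<N. (\<Sum>j<N. p j) - p i \<noteq> 0"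
  defines "q \<equiv> weight CARD('n) N p"
  defines "c \<equiv> Max {q i * norm (f i) * norm (frame_op_inv K N f (f i)) | i. i < N}"
  defines "\<rho>1 \<equiv> {i. i < N \<and> q i * norm (f i) * norm (frame_op_inv K N f (f i)) = c}"
  defines "\<rho>2 \<equiv> {..<N} - \<rho>1"
  assumes inter: "kspan K \<rho>1 f \<inter> kspan K \<rho>2 f = {0}"
    and indep: "klin_indep K \<rho>2 f"
  shows "opt_dual K N p f 1 (canonical_dual K N f)
       \<and> (\<forall>g. opt_dual K N p f 1 g \<longrightarrow> (\<forall>i<N. g i = canonical_dual K N f i))
       \<and> (\<forall>m. 1 \<le> m \<and> m \<le> N \<longrightarrow> opt_dual K N p f m (canonical_dual K N f))"
proof -
  define h where "h = canonical_dual K N f"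
  have hh: "h i = frame_op_inv K N f (f i)" for i by (simp add: h_def canonical_dual_def)
  define a where "a g i = q i * norm (f i) * norm (g i)" for g :: "nat \<Rightarrow> complex^'n" and i
  have N1: "N \<ge> 1" using NgE by (metis One_nat_def Suc_leI le_trans zero_less_card_finite)
  have sp: "(\<Sum>j<N. p j) = 1" using prob by (simp add: prob_seq_def)
  have N2: "N \<ge> 2"
  proof (rule ccontr)
    assume "\<not> N \<ge> 2"
    hence "N = 1" using N1 by simp
    thus False using wd[rule_format, of 0] by simp
  qed
  have qpos: "q i > 0" if i: "i < N" for i
  proof -
    have "p i \<le> 1" using prob i by (simp add: prob_seq_def)
    moreover have "1 - p i \<noteq> 0" using wd i sp by simp
    ultimately have "1 - p i > 0" by simp
    moreover have "real N - 1 > 0" using N2 by simp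
    moreover have "real CARD('n) > 0" by simp
    ultimately show ?thesis unfolding q_def weight_def sp by simp
  qed
  have q0: "\<forall>i<N. weight CARD('n) N p i \<ge> 0" using qpos q_def by (simp add: less_imp_le)
  have dmpa: "dmp K N p 1 f g = Max (a g ` {..<N})" for g
    unfolding a_def q_def by (rule dmp1[OF K frame q0])
  have finA: "finite (a g ` {..<N})" for g by simp
  have neA: "a g ` {..<N} \<noteq> {}" for g using N1 by (simp add: lessThan_empty_iff)
  have cdef: "c = Max (a h ` {..<N})"
    unfolding c_def a_def hh by (rule arg_cong[where f=Max]) auto
  have chd: "dmp K N p 1 f h = c" using dmpa cdef by simp
  have hdual: "is_dual K N f h" unfolding h_def by (rule cd_dual[OF K frame])
  have hS: "h i \<in> hspace K \<and> frame_op N f (h i) = f i" if "i < N" for i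
    unfolding h_def using candual[OF K frame that] .
  have cpos: "c > 0"
  proof (rule ccontr)
    assume "\<not> c > 0"
    hence "\<forall>i<N. a h i \<le> 0" using cdef Max_ge[OF finA] by (metis imageI lessThan_iff not_le order.strict_trans1)
    hence f0: "\<forall>i<N. f i = 0"
    proof (intro allI impI)
      fix i assume ai: "\<forall>i<N. a h i \<le> 0" and i: "i < N"
      have "a h i \<ge> 0" using qpos[OF i] by (simp add: a_def)
      moreover have "a h i \<le> 0" using ai i by blast
      ultimately have "q i * norm (f i) * norm (h i) = 0" unfolding a_def by linarith
      hence "f i = 0 \<or> h i = 0" using qpos[OF i] by simp
      thus "f i = 0" using hS[OF i] frame_op_zero by metis
    qed
    obtain k :: 'n where True by blast
    have "axis k 1 \<in> kspan K {..<N} f" using frame hs_axis[OF K] by (simp add: is_frame_def)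
    then obtain cc where "axis k (1::complex) = (\<Sum>i<N. cc i *s f i)" unfolding kspan_def by blast
    hence "axis k (1::complex) = 0" using f0 by simp
    thus False by (simp add: axis_eq_0_iff)
  qed
  have key: "\<forall>i<N. g i = h i" if g: "is_dual K N f g" and le: "dmp K N p 1 f g \<le> c" for g
  proof -
    have ag: "a g i \<le> c" if i: "i < N" for i
    proof -
      have "a g i \<le> Max (a g ` {..<N})" using Max_ge[OF finA] i by blast
      thus ?thesis using le dmpa[of g] by simp
    qed
    have "\<forall>i\<in>\<rho>1. norm (g i) \<le> norm (canonical_dual K N f i)"
    proof
      fix i assume i: "i \<in> \<rho>1"
      hence iN: "i < N" and ah: "a h i = c" unfolding \<rho>1_def a_def hh by auto
      have "a g i \<le> a h i" using ag[OF iN] ah by simp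
      moreover have "f i \<noteq> 0" using cpos ah by (auto simp: a_def)
      hence "q i * norm (f i) > 0" using qpos[OF iN] by simp
      ultimately have "norm (g i) \<le> norm (h i)" unfolding a_def using mult_le_cancel_left_pos by metis
      thus "norm (g i) \<le> norm (canonical_dual K N f i)" by (simp add: h_def)
    qed
    hence "\<forall>i<N. g i = canonical_dual K N f i"
      by (intro main_unique[OF K frame g _ meta_eq_to_obj_eq[OF \<rho>2_def] inter indep]) (auto simp: \<rho>1_def)
    thus ?thesis by (simp add: h_def)
  qed
  have ge: "dmp K N p 1 f g \<ge> c" if g: "is_dual K N f g" for g
  proof (rule ccontr)
    assume "\<not> dmp K N p 1 f g \<ge> c"
    hence lt: "dmp K N p 1 f g < c" by simp
    hence "\<forall>i<N. g i = h i" using key[OF g] by simp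
    hence "dmp K N p 1 f g = dmp K N p 1 f h" by (rule dmp_cong)
    thus False using lt chd by simp
  qed
  have infc: "Inf {dmp K N p 1 f g' | g'. opt_dual K N p f 0 g'} = c"
    by (rule cInf_eq_minimum) (use hdual chd ge in auto)
  have one: "opt_dual K N p f 1 h"
    using hdual chd infc by simp
  have uniq: "\<forall>g. opt_dual K N p f 1 g \<longrightarrow> (\<forall>i<N. g i = h i)"
  proof (rule allI, rule impI)
    fix g assume "opt_dual K N p f 1 g"
    hence "is_dual K N f g" "dmp K N p 1 f g = c" using infc by simp_all
    thus "\<forall>i<N. g i = h i" using key by simp
  qed
  show ?thesis using one uniq opt_all[OF one uniq] unfolding h_def by blast
qed

end
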